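(* Let $0<\beta\le\alpha$, let $\hat A=(\hat a[i_1],\dots,\hat a[i_m])$ be an $\alpha$-RS, and let $\theta>0$ satisfy $\hat a[i_1]\le\theta$. Let $i_v$ be the largest index in $\{i_1,\dots,i_m\}$ with $\hat a[i_v]\le\theta$. For an integer $\kappa$ let $H(\kappa)$ denote the largest index $i_u$ with $\hat a[i_u]\le(1+\beta)^{\kappa}$, when such an index exists. Then either $i_v=H(\lceil\log_{1+\beta}\theta\rceil)$ or $i_v=H(\lfloor\log_{1+\beta}\theta\rfloor)$ (the latter being defined in that case).
   Context: An $\alpha$-representative sequence ($\alpha$-RS), for $\alpha\ge 0$, is a finite sequence $\hat A=(\hat a[i_1],\hat a[i_2],\dots,\hat a[i_m])$ of real numbers with associated integer indices $0\le i_1<i_2<\dots<i_m$ such that $\hat a[i_1]\ge 0$ and $\hat a[i_{v+1}]\ge(1+\alpha)\hat a[i_v]$ for all $v\in[1,m-1]$. *)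

theory Defs
  imports Complex_Main
begin

text \<open>An alpha-representative sequence of length m is given by values a 0, ..., a (m-1)
  (the entries a-hat[i_1], ..., a-hat[i_m], 0-based) together with integer indices
  idx 0 < idx 1 < ... < idx (m-1), all natural numbers.\<close>
definition alpha_RS :: "real \<Rightarrow> (nat \<Rightarrow> real) \<Rightarrow> (nat \<Rightarrow> nat) \<Rightarrow> nat \<Rightarrow> bool" where
  "alpha_RS \<alpha> a idx m \<longleftrightarrow> \<alpha> \<ge> 0 \<and> m \<ge> 1 \<and> a 0 \<ge> 0 \<and>
     (\<forall>v. Suc v < m \<longrightarrow> idx v < idx (Suc v)) \<and>
     (\<forall>v. Suc v < m \<longrightarrow> a (Suc v) \<ge> (1 + \<alpha>) * a v)"

definition largest_le :: "(nat \<Rightarrow> real) \<Rightarrow> (nat \<Rightarrow> nat) \<Rightarrow> nat \<Rightarrow> real \<Rightarrow> nat option" where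
  "largest_le a idx m t =
     (if {idx u | u. u < m \<and> a u \<le> t} = {} then None
      else Some (Max {idx u | u. u < m \<and> a u \<le> t}))"

definition H_idx :: "real \<Rightarrow> (nat \<Rightarrow> real) \<Rightarrow> (nat \<Rightarrow> nat) \<Rightarrow> nat \<Rightarrow> int \<Rightarrow> nat option" where
  "H_idx \<beta> a idx m \<kappa> = largest_le a idx m ((1 + \<beta>) powr (real_of_int \<kappa>))"

end

theory Submission
  imports Defs
begin

lemma ll_cong:
  assumes "\<forall>u<m. (a u \<le> t1 \<longleftrightarrow> a u \<le> t2)"
  shows "largest_le a idx m t1 = largest_le a idx m t2"
proof -
  have "{idx u | u. u < m \<and> a u \<le> t1} = {idx u | u. u < m \<and> a u \<le> t2}"
    using assms by blast
  thus ?thesis unfolding largest_le_def by simp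
qed

theorem lemma3:
  fixes \<alpha> \<beta> \<theta> :: real and a :: "nat \<Rightarrow> real" and idx :: "nat \<Rightarrow> nat" and m :: nat
  assumes "0 < \<beta>" and "\<beta> \<le> \<alpha>"
    and "alpha_RS \<alpha> a idx m"
    and "0 < \<theta>" and "a 0 \<le> \<theta>"
  shows "largest_le a idx m \<theta> = H_idx \<beta> a idx m \<lceil>log (1 + \<beta>) \<theta>\<rceil>
       \<or> largest_le a idx m \<theta> = H_idx \<beta> a idx m \<lfloor>log (1 + \<beta>) \<theta>\<rfloor>"
proof -
  let ?b = "1 + \<beta>"
  define PL where "PL = ?b powr real_of_int \<lfloor>log ?b \<theta>\<rfloor>"
  define PU where "PU = ?b powr real_of_int \<lceil>log ?b \<theta>\<rceil>"
  have b1: "?b > 1" using assms(1) by simp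
  have th: "\<theta> = ?b powr log ?b \<theta>" using assms(4) b1 by simp
  have PL: "PL \<le> \<theta>" unfolding PL_def
    by (subst th, rule powr_mono) (use b1 in auto)
  have PU: "\<theta> \<le> PU" unfolding PU_def
    by (subst th, rule powr_mono) (use b1 in auto)
  have PUL: "PU \<le> ?b * PL"
  proof -
    have "PU \<le> ?b powr (real_of_int \<lfloor>log ?b \<theta>\<rfloor> + 1)" unfolding PU_def
      by (rule powr_mono) (use b1 in \<open>auto simp: ceiling_altdef\<close>)
    also have "\<dots> = ?b * PL" unfolding PL_def using b1 by (simp add: powr_add)
    finally show ?thesis .
  qed
  have RS: "a 0 \<ge> 0" "\<And>v. Suc v < m \<Longrightarrow> a (Suc v) \<ge> (1 + \<alpha>) * a v"
    using assms(3) unfolding alpha_RS_def by auto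
  have nn: "\<And>v. v < m \<Longrightarrow> a v \<ge> 0"
  proof -
    fix v show "v < m \<Longrightarrow> a v \<ge> 0"
    proof (induction v)
      case 0 then show ?case using RS by simp
    next
      case (Suc v)
      then have "a v \<ge> 0" by simp
      moreover have "(1+\<alpha>) * a v \<ge> 0" using calculation assms(1,2) by simp
      ultimately show ?case using RS(2)[OF Suc.prems] by linarith
    qed
  qed
  have step: "\<And>v. Suc v < m \<Longrightarrow> a (Suc v) \<ge> ?b * a v"
  proof -
    fix v assume v: "Suc v < m"
    have "?b * a v \<le> (1+\<alpha>) * a v" using nn[of v] v assms(2) by (intro mult_right_mono) auto
    thus "a (Suc v) \<ge> ?b * a v" using RS(2)[OF v] by linarith
  qed
  have st1: "\<And>v. Suc v < m \<Longrightarrow> a v \<le> a (Suc v)"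
  proof -
    fix v assume v: "Suc v < m"
    have "a v \<le> ?b * a v" using nn[of v] v b1 by (simp add: algebra_simps)
    thus "a v \<le> a (Suc v)" using step[OF v] by linarith
  qed
  have mono: "\<And>u w. u \<le> w \<Longrightarrow> w < m \<Longrightarrow> a u \<le> a w"
  proof -
    fix u w show "u \<le> w \<Longrightarrow> w < m \<Longrightarrow> a u \<le> a w"
    proof (induction w)
      case 0 then show ?case by simp
    next
      case (Suc w)
      show ?case
      proof (cases "u = Suc w")
        case True then show ?thesis by simp
      next
        case False
        then have "a u \<le> a w" using Suc by simp
        then show ?thesis using st1[OF Suc.prems(2)] by linarith
      qed
    qed
  qed
  have "(\<forall>u<m. (a u \<le> \<theta> \<longleftrightarrow> a u \<le> PU)) \<or> (\<forall>u<m. (a u \<le> \<theta> \<longleftrightarrow> a u \<le> PL))"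
  proof (rule ccontr)
    assume "\<not> ?thesis"
    then obtain u w where u: "u < m" "a u \<le> PU" "a u > \<theta>"
      and w: "w < m" "a w \<le> \<theta>" "a w > PL"
      using PL PU by force
    have "w < u" using mono[of u w] u w by (cases "u \<le> w") auto
    then have "a (Suc w) \<le> a u" using mono u by simp
    moreover have "a (Suc w) \<ge> ?b * a w" using step \<open>w < u\<close> u by simp
    moreover have "?b * a w > ?b * PL" using w b1 by simp
    ultimately show False using PUL u by linarith
  qed
  then show ?thesis unfolding H_idx_def PU_def[symmetric] PL_def[symmetric]
    using ll_cong by blast
qed

end
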